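(* Let $M$ be a matroid on $S$ and $N$ a matroid on $T$ with $S\cap T=\emptyset$, let $P=M\mathbin{\Box} N$, and let $U\subseteq V\subseteq S\cup T$. Then $$P(U,V) = (\mathrm{T}^j M)(U\cap S,\,V\cap S)\ \mathbin{\Box}\ (\mathrm{L}^i N)(U\cap T,\,V\cap T),$$ where $j=\nu_N(U\cap T)$ and $i=\lambda_M(V\cap S)$.
   Context: For a matroid $M$ on $S$ write $\rho_M$ for rank, $\rho(M)=\rho_M(S)$, $\nu_M(A)=|A|-\rho_M(A)$, $\lambda_M(A)=\rho(M)-\rho_M(A)$. For matroids $M$ on $S$ and $N$ on $T$ with $S\cap T=\emptyset$, the free product $M\mathbin{\Box} N$ is the matroid on $S\cup T$ whose independent sets are those $A$ with $A\cap S$ independent in $M$ and $\lambda_M(A\cap S)\geq\nu_N(A\cap T)$. For a matroid $M$ on $S$ and $A\subseteq B\subseteq S$, $M(A,B)$ denotes the minor $(M|B)/A=(M/A)|(B\setminus A)$. The truncation $\mathrm{T}M$ has as independent sets the independent sets $A$ of $M$ with $|A|\leq\max\{0,\rho(M)-1\}$; the Higgs lift $\mathrm{L}M$ has as independent sets the $A\subseteq S$ with $\nu_M(A)\leq 1$; $\mathrm{T}^j$, $\mathrm{L}^i$ are the iterates. *)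

theory Defs
  imports Main
begin

text \<open>All constructions below keep the independent sets inside the ground set,
  so equality of matroids is equality of these pairs.\<close>

type_synonym 'a matroid = "'a set \<times> 'a set set"

definition carrier :: "'a matroid \<Rightarrow> 'a set" where
  "carrier M = fst M"

definition indeps :: "'a matroid \<Rightarrow> 'a set set" where
  "indeps M = snd M"

definition matroid :: "'a matroid \<Rightarrow> bool" where
  "matroid M \<longleftrightarrow> finite (carrier M)
     \<and> (\<forall>X\<in>indeps M. X \<subseteq> carrier M)
     \<and> {} \<in> indeps M
     \<and> (\<forall>X Y. X \<in> indeps M \<and> Y \<subseteq> X \<longrightarrow> Y \<in> indeps M)
     \<and> (\<forall>X Y. X \<in> indeps M \<and> Y \<in> indeps M \<and> card X < card Y
          \<longrightarrow> (\<exists>y\<in>Y - X. insert y X \<in> indeps M))"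

definition rk :: "'a matroid \<Rightarrow> 'a set \<Rightarrow> nat" where
  "rk M A = Max {card X | X. X \<subseteq> A \<and> X \<in> indeps M}"

definition rank_of :: "'a matroid \<Rightarrow> nat" where
  "rank_of M = rk M (carrier M)"

definition nul :: "'a matroid \<Rightarrow> 'a set \<Rightarrow> nat" where
  "nul M A = card A - rk M A"

definition lam :: "'a matroid \<Rightarrow> 'a set \<Rightarrow> nat" where
  "lam M A = rank_of M - rk M A"

definition free_product :: "'a matroid \<Rightarrow> 'a matroid \<Rightarrow> 'a matroid" where
  "free_product M N = (carrier M \<union> carrier N,
     {A. A \<subseteq> carrier M \<union> carrier N \<and> A \<inter> carrier M \<in> indeps M
         \<and> lam M (A \<inter> carrier M) \<ge> nul N (A \<inter> carrier N)})"

definition restr :: "'a matroid \<Rightarrow> 'a set \<Rightarrow> 'a matroid" where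
  "restr M B = (B, {X \<in> indeps M. X \<subseteq> B})"

definition contr :: "'a matroid \<Rightarrow> 'a set \<Rightarrow> 'a matroid" where
  "contr M A = (carrier M - A,
     {X. X \<subseteq> carrier M - A \<and> rk M (X \<union> A) = card X + rk M A})"

definition minor :: "'a matroid \<Rightarrow> 'a set \<Rightarrow> 'a set \<Rightarrow> 'a matroid" where
  "minor M A B = contr (restr M B) A"

definition trunc :: "'a matroid \<Rightarrow> 'a matroid" where
  "trunc M = (carrier M, {X \<in> indeps M. int (card X) \<le> max 0 (int (rank_of M) - 1)})"

definition lift :: "'a matroid \<Rightarrow> 'a matroid" where
  "lift M = (carrier M, {X. X \<subseteq> carrier M \<and> nul M X \<le> 1})"

end

theory Submission
  imports Defs
begin

lemma m_fin: "matroid M \<Longrightarrow> finite (carrier M)"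
  unfolding matroid_def by (elim conjE)
lemma m_sub: "matroid M \<Longrightarrow> X \<in> indeps M \<Longrightarrow> X \<subseteq> carrier M"
  unfolding matroid_def by (elim conjE) (erule bspec)
lemma m_empty: "matroid M \<Longrightarrow> {} \<in> indeps M"
  unfolding matroid_def by (elim conjE)
lemma m_down: assumes "matroid M" "X \<in> indeps M" "Y \<subseteq> X" shows "Y \<in> indeps M"
proof -
  have "\<forall>X Y. X \<in> indeps M \<and> Y \<subseteq> X \<longrightarrow> Y \<in> indeps M" using assms(1) unfolding matroid_def by (elim conjE)
  then show ?thesis using assms(2,3) by blast
qed
lemma m_aug: assumes "matroid M" "X \<in> indeps M" "Y \<in> indeps M" "card X < card Y"
  shows "\<exists>y\<in>Y - X. insert y X \<in> indeps M"
proof -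
  have "\<forall>X Y. X \<in> indeps M \<and> Y \<in> indeps M \<and> card X < card Y
          \<longrightarrow> (\<exists>y\<in>Y - X. insert y X \<in> indeps M)" using assms(1) unfolding matroid_def by (elim conjE)
  then show ?thesis using assms(2-4) by blast
qed
lemma m_ifin: "matroid M \<Longrightarrow> X \<in> indeps M \<Longrightarrow> finite X"
  by (rule finite_subset[OF m_sub m_fin])

lemma rk_eqI:
  assumes "\<And>Z. Z \<subseteq> A \<Longrightarrow> Z \<in> indeps M \<Longrightarrow> card Z \<le> n"
    and "Z0 \<subseteq> A" "Z0 \<in> indeps M" "card Z0 = n"
  shows "rk M A = n"
  unfolding rk_def
proof (rule Max_eqI)
  show "finite {card X |X. X \<subseteq> A \<and> X \<in> indeps M}"
    by (rule finite_subset[of _ "{..n}"]) (use assms(1) in auto)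
qed (use assms in auto)

lemma rk_fin: "matroid M \<Longrightarrow> finite {card X |X. X \<subseteq> A \<and> X \<in> indeps M}"
  by (rule finite_subset[of _ "card ` Pow (carrier M)"]) (auto dest: m_sub m_fin)

lemma rk_ge: "matroid M \<Longrightarrow> X \<subseteq> A \<Longrightarrow> X \<in> indeps M \<Longrightarrow> card X \<le> rk M A"
  unfolding rk_def by (rule Max_ge) (auto simp: rk_fin)

lemma rk_obtain: assumes "matroid M" shows "\<exists>X. X \<subseteq> A \<and> X \<in> indeps M \<and> card X = rk M A"
proof -
  have "rk M A \<in> {card X |X. X \<subseteq> A \<and> X \<in> indeps M}"
    unfolding rk_def
  proof (rule Max_in)
    show "finite {card X |X. X \<subseteq> A \<and> X \<in> indeps M}" using rk_fin assms .
    have "0 \<in> {card X |X. X \<subseteq> A \<and> X \<in> indeps M}" using m_empty[OF assms] unfolding mem_Collect_eq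
      by (intro exI[of _ "{}"]) auto
    then show "{card X |X. X \<subseteq> A \<and> X \<in> indeps M} \<noteq> {}" by blast
  qed
  then show ?thesis by auto
qed

lemma rk_le: assumes "matroid M" "\<And>X. X \<subseteq> A \<Longrightarrow> X \<in> indeps M \<Longrightarrow> card X \<le> n" shows "rk M A \<le> n"
proof -
  obtain X where X: "X \<subseteq> A" "X \<in> indeps M" "card X = rk M A" using rk_obtain[OF assms(1), of A] by blast
  show ?thesis using assms(2)[OF X(1) X(2)] X(3) by simp
qed

lemma rk_mono: assumes "matroid M" "A \<subseteq> B" shows "rk M A \<le> rk M B"
proof -
  obtain X where X: "X \<subseteq> A" "X \<in> indeps M" "card X = rk M A" using rk_obtain[OF assms(1), of A] by blast
  have "X \<subseteq> B" using X(1) assms(2) by (rule order_trans)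
  show ?thesis using rk_ge[OF assms(1) \<open>X \<subseteq> B\<close> X(2)] X(3) by simp
qed

lemma rk_card: assumes "matroid M" "finite A" shows "rk M A \<le> card A"
proof -
  obtain X where X: "X \<subseteq> A" "X \<in> indeps M" "card X = rk M A" using rk_obtain[OF assms(1), of A] by blast
  show ?thesis using card_mono[OF assms(2) X(1)] X(3) by simp
qed

lemma rk_indep: "matroid M \<Longrightarrow> X \<in> indeps M \<Longrightarrow> rk M X = card X"
  by (rule rk_eqI[of X _ _ X]) (auto simp: card_mono m_ifin)

lemma rk_union_le: assumes "matroid M" "finite X" shows "rk M (A \<union> X) \<le> rk M A + card X"
proof -
  obtain Z where Z: "Z \<subseteq> A \<union> X" "Z \<in> indeps M" "card Z = rk M (A \<union> X)"
    using rk_obtain[OF assms(1), of "A \<union> X"] by blast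
  have fz: "finite Z" using m_ifin[OF assms(1) Z(2)] .
  have 1: "card Z \<le> card (Z \<inter> A) + card (Z - A)"
    by (metis card_Un_le Int_Diff_Un)
  have 2: "card (Z \<inter> A) \<le> rk M A" using rk_ge[OF assms(1) Int_lower2 m_down[OF assms(1) Z(2) Int_lower1]] .
  have "Z - A \<subseteq> X" using Z(1) by blast
  then have 3: "card (Z - A) \<le> card X" using card_mono[OF assms(2)] by blast
  show ?thesis using 1 2 3 Z(3) by linarith
qed

lemma basis_ext: assumes "matroid M"
  shows "X \<subseteq> A \<Longrightarrow> X \<in> indeps M \<Longrightarrow> \<exists>B. X \<subseteq> B \<and> B \<subseteq> A \<and> B \<in> indeps M \<and> card B = rk M A"
proof (induction "rk M A - card X" arbitrary: X rule: less_induct)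
  case less
  have le: "card X \<le> rk M A" using rk_ge[OF assms less(2) less(3)] .
  show ?case
  proof (cases "card X = rk M A")
    case True then show ?thesis using less by blast
  next
    case False
    obtain Y where Y: "Y \<subseteq> A" "Y \<in> indeps M" "card Y = rk M A" using rk_obtain[OF assms(1), of "A"] by blast
    then obtain y where y: "y \<in> Y - X" "insert y X \<in> indeps M"
      using m_aug[OF assms less(3) Y(2)] le False by auto
    have fx: "finite X" using m_ifin[OF assms less(3)] .
    have c: "card (insert y X) = card X + 1" using y fx by simp
    have "rk M A - card (insert y X) < rk M A - card X" using c le False by simp
    from less(1)[OF this] y Y less(2) obtain B where
      "insert y X \<subseteq> B \<and> B \<subseteq> A \<and> B \<in> indeps M \<and> card B = rk M A" by blast
    then show ?thesis by blast
  qed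
qed

lemma rk_increase: assumes "matroid M" "rk M X < rk M Y" "finite X"
  shows "\<exists>y\<in>Y - X. rk M (insert y X) = rk M X + 1"
proof -
  obtain B where B: "B \<subseteq> X" "B \<in> indeps M" "card B = rk M X" using rk_obtain[OF assms(1), of "X"] by blast
  obtain C where C: "C \<subseteq> Y" "C \<in> indeps M" "card C = rk M Y" using rk_obtain[OF assms(1), of "Y"] by blast
  obtain c where c: "c \<in> C - B" "insert c B \<in> indeps M" using m_aug[OF assms(1) B(2) C(2)] B C assms by auto
  have fb: "finite B" using m_ifin[OF assms(1) B(2)] .
  have cb: "card (insert c B) = rk M X + 1" using c fb B by simp
  have "c \<notin> X"
  proof
    assume "c \<in> X"
    then have "insert c B \<subseteq> X" using B(1) by blast
    then have "card (insert c B) \<le> rk M X" using rk_ge[OF assms(1) _ c(2)] by blast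
    then show False using cb by simp
  qed
  then have cy: "c \<in> Y - X" using c C by auto
  have "insert c B \<subseteq> insert c X" using B(1) by blast
  then have "rk M X + 1 \<le> rk M (insert c X)" using cb rk_ge[OF assms(1) _ c(2)] by simp
  moreover have "rk M (insert c X) \<le> rk M X + 1" using rk_union_le[OF assms(1), of "{c}" X] by simp
  ultimately show ?thesis using cy by (intro bexI[of _ c]) auto
qed

lemma rk_restr: "Y \<subseteq> B \<Longrightarrow> rk (restr M B) Y = rk M Y"
  unfolding rk_def restr_def indeps_def by (rule arg_cong[where f=Max]) auto

lemma restr_simps: "carrier (restr M B) = B" "indeps (restr M B) = {X \<in> indeps M. X \<subseteq> B}"
  by (simp_all add: restr_def carrier_def indeps_def)

lemma matroid_restr: assumes "matroid M" "B \<subseteq> carrier M" shows "matroid (restr M B)"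
  unfolding matroid_def[of "restr M B"]
proof (intro conjI allI impI ballI)
  show "finite (carrier (restr M B))" using finite_subset[OF assms(2) m_fin[OF assms(1)]] by (simp add: restr_simps)
  show "X \<subseteq> carrier (restr M B)" if "X \<in> indeps (restr M B)" for X
    using that by (simp add: restr_simps)
  show "{} \<in> indeps (restr M B)" using m_empty[OF assms(1)] by (simp add: restr_simps)
  show "Y \<in> indeps (restr M B)" if "X \<in> indeps (restr M B) \<and> Y \<subseteq> X" for X Y
  proof -
    have X: "X \<in> indeps M" "X \<subseteq> B" "Y \<subseteq> X" using that by (auto simp: restr_simps)
    show ?thesis using m_down[OF assms(1) X(1) X(3)] X by (auto simp: restr_simps)
  qed
  show "\<exists>y\<in>Y - X. insert y X \<in> indeps (restr M B)"
    if "X \<in> indeps (restr M B) \<and> Y \<in> indeps (restr M B) \<and> card X < card Y" for X Y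
  proof -
    have X: "X \<in> indeps M" "X \<subseteq> B" and Y: "Y \<in> indeps M" "Y \<subseteq> B" and c: "card X < card Y"
      using that by (auto simp: restr_simps)
    obtain y where y: "y \<in> Y - X" "insert y X \<in> indeps M" using m_aug[OF assms(1) X(1) Y(1) c] by blast
    then show ?thesis using X Y by (auto simp: restr_simps)
  qed
qed

lemma rk_contr: assumes "matroid M" "A \<subseteq> carrier M" "X \<subseteq> carrier M - A"
  shows "rk (contr M A) X = rk M (X \<union> A) - rk M A"
proof -
  obtain BA where BA: "BA \<subseteq> A" "BA \<in> indeps M" "card BA = rk M A" using rk_obtain[OF assms(1), of "A"] by blast
  obtain B where B: "BA \<subseteq> B" "B \<subseteq> X \<union> A" "B \<in> indeps M" "card B = rk M (X \<union> A)"
    using basis_ext[OF assms(1), of BA "X \<union> A"] BA by blast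
  have fB: "finite B" using m_ifin[OF assms(1) B(3)] .
  have "card (B \<inter> A) \<le> rk M A" using rk_ge[OF assms(1) Int_lower2 m_down[OF assms(1) B(3) Int_lower1]] .
  then have "BA = B \<inter> A" using BA B fB
    by (intro card_seteq) auto
  then have YX: "B - BA \<subseteq> X" using B by auto
  have cY: "card (B - BA) = rk M (X \<union> A) - rk M A" using B BA fB by (simp add: card_Diff_subset finite_subset)
  have "B \<subseteq> (B - BA) \<union> A" using BA by blast
  then have "rk M ((B - BA) \<union> A) \<ge> card B" using rk_ge[OF assms(1) _ B(3)] by blast
  moreover have "(B - BA) \<union> A \<subseteq> X \<union> A" using YX by blast
  then have "rk M ((B - BA) \<union> A) \<le> rk M (X \<union> A)" using rk_mono[OF assms(1)] by blast
  ultimately have e: "rk M ((B - BA) \<union> A) = card (B - BA) + rk M A"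
    using B cY rk_mono[OF assms(1), of A "X \<union> A"] by auto
  show ?thesis
  proof (rule rk_eqI[of X _ _ "B - BA"])
    fix Z assume Z: "Z \<subseteq> X" "Z \<in> indeps (contr M A)"
    then have "rk M (Z \<union> A) = card Z + rk M A" unfolding contr_def indeps_def by auto
    moreover have "Z \<union> A \<subseteq> X \<union> A" using Z(1) by blast
    then have "rk M (Z \<union> A) \<le> rk M (X \<union> A)" using rk_mono[OF assms(1)] by blast
    ultimately show "card Z \<le> rk M (X \<union> A) - rk M A" by simp
  next
    show "B - BA \<in> indeps (contr M A)" unfolding contr_def indeps_def carrier_def
      using e YX assms(3) by (auto simp: carrier_def)
  qed (use YX cY in auto)
qed

definition tset :: "'a matroid \<Rightarrow> nat \<Rightarrow> 'a matroid" where
  "tset M m = (carrier M, {X \<in> indeps M. card X \<le> m})"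

definition lset :: "'a matroid \<Rightarrow> nat \<Rightarrow> 'a matroid" where
  "lset N k = (carrier N, {X. X \<subseteq> carrier N \<and> nul N X \<le> k})"

lemma tset_simps: "carrier (tset M m) = carrier M" "indeps (tset M m) = {X \<in> indeps M. card X \<le> m}"
  by (simp_all add: tset_def carrier_def indeps_def)

lemma lset_simps: "carrier (lset M m) = carrier M" "indeps (lset M m) = {X. X \<subseteq> carrier M \<and> nul M X \<le> m}"
  by (simp_all add: lset_def carrier_def indeps_def)

lemma rk_tset: assumes "matroid M" shows "rk (tset M m) Y = min (rk M Y) m"
proof -
  obtain B where B: "B \<subseteq> Y" "B \<in> indeps M" "card B = rk M Y" using rk_obtain[OF assms(1), of "Y"] by blast
  have "min (rk M Y) m \<le> card B" using B by simp
  then obtain W where W: "W \<subseteq> B" "card W = min (rk M Y) m" "finite W"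
    by (rule obtain_subset_with_card_n)
  show ?thesis
  proof (rule rk_eqI[of Y _ _ W])
    fix Z assume "Z \<subseteq> Y" "Z \<in> indeps (tset M m)"
    then show "card Z \<le> min (rk M Y) m" using rk_ge[OF assms] by (auto simp: tset_simps)
  qed (use W B m_down[OF assms] in \<open>auto simp: tset_simps\<close>)
qed

lemma matroid_tset: assumes "matroid M" shows "matroid (tset M m)"
  unfolding matroid_def[of "tset M m"]
proof (intro conjI allI impI ballI)
  show "finite (carrier (tset M m))" using m_fin[OF assms] by (simp add: tset_simps)
  show "X \<subseteq> carrier (tset M m)" if "X \<in> indeps (tset M m)" for X
    using that m_sub[OF assms] by (auto simp: tset_simps)
  show "{} \<in> indeps (tset M m)" using m_empty[OF assms] by (simp add: tset_simps)
  show "Y \<in> indeps (tset M m)" if "X \<in> indeps (tset M m) \<and> Y \<subseteq> X" for X Y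
  proof -
    have X: "X \<in> indeps M" "card X \<le> m" "Y \<subseteq> X" using that by (auto simp: tset_simps)
    have "card Y \<le> m" using card_mono[OF m_ifin[OF assms X(1)] X(3)] X(2) by linarith
    then show ?thesis using m_down[OF assms X(1) X(3)] by (simp add: tset_simps)
  qed
  show "\<exists>y\<in>Y - X. insert y X \<in> indeps (tset M m)"
    if "X \<in> indeps (tset M m) \<and> Y \<in> indeps (tset M m) \<and> card X < card Y" for X Y
  proof -
    have X: "X \<in> indeps M" "card X \<le> m" and Y: "Y \<in> indeps M" "card Y \<le> m" and c: "card X < card Y"
      using that by (auto simp: tset_simps)
    obtain y where y: "y \<in> Y - X" "insert y X \<in> indeps M" using m_aug[OF assms(1) X(1) Y(1) c] by blast
    have "card (insert y X) \<le> m" using y X Y c m_ifin[OF assms X(1)] by simp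
    then show ?thesis using y by (auto simp: tset_simps)
  qed
qed

lemma indep_le_rank: "matroid M \<Longrightarrow> X \<in> indeps M \<Longrightarrow> card X \<le> rank_of M"
  unfolding rank_of_def by (rule rk_ge[OF _ m_sub])

lemma trunc_iter: assumes "matroid M" shows "(trunc ^^ k) M = tset M (rank_of M - k)"
proof (induction k)
  case 0
  have "M = (carrier M, indeps M)" by (simp add: carrier_def indeps_def)
  also have "\<dots> = tset M (rank_of M)" unfolding tset_def using indep_le_rank[OF assms] by auto
  finally show ?case by simp
next
  case (Suc k)
  have r: "rank_of (tset M (rank_of M - k)) = rank_of M - k"
    unfolding rank_of_def[of "tset M _"] tset_simps rk_tset[OF assms] by (simp add: rank_of_def)
  have "(trunc ^^ Suc k) M = trunc (tset M (rank_of M - k))" using Suc by simp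
  also have "\<dots> = tset M (rank_of M - Suc k)"
    unfolding trunc_def r tset_simps by (auto simp: tset_def)
  finally show ?case .
qed

lemma nul_mono: assumes "matroid N" "finite X" "Y \<subseteq> X" shows "nul N Y \<le> nul N X"
proof -
  have "rk N X \<le> rk N Y + card (X - Y)" using rk_union_le[OF assms(1), of "X - Y" Y] assms
    by (simp add: Un_absorb1 Un_Diff_cancel)
  moreover have "card X = card Y + card (X - Y)" using assms
    by (metis card_Diff_subset finite_subset card_mono le_add_diff_inverse)
  moreover have "rk N Y \<le> card Y" using rk_card[OF assms(1) finite_subset[OF assms(3,2)]] .
  ultimately show ?thesis unfolding nul_def by linarith
qed

lemma exists_nul: assumes "matroid N" "finite Y"
  shows "\<exists>W\<subseteq>Y. nul N W \<le> k \<and> card W = min (card Y) (rk N Y + k)"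
proof -
  obtain B where B: "B \<subseteq> Y" "B \<in> indeps N" "card B = rk N Y" using rk_obtain[OF assms(1), of "Y"] by blast
  have cYB: "card (Y - B) = card Y - rk N Y" using B assms by (simp add: card_Diff_subset finite_subset)
  have "min k (card Y - rk N Y) \<le> card (Y - B)" using cYB by simp
  then obtain W' where W': "W' \<subseteq> Y - B" "card W' = min k (card Y - rk N Y)" "finite W'"
    by (rule obtain_subset_with_card_n)
  have fB: "finite B" using finite_subset[OF B(1) assms(2)] .
  have fW: "finite W'" using W'(3) .
  have cW: "card (B \<union> W') = rk N Y + min k (card Y - rk N Y)"
    using W' B fB fW by (subst card_Un_disjoint) auto
  have "card B \<le> rk N (B \<union> W')" using rk_ge[OF assms(1) Un_upper1 B(2)] .
  then have "nul N (B \<union> W') \<le> k" unfolding nul_def using cW B by linarith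
  moreover have "rk N Y \<le> card Y" using rk_card[OF assms] .
  ultimately show ?thesis using cW B W' by (intro exI[of _ "B \<union> W'"]) auto
qed

lemma rk_lset: assumes "matroid N" "Y \<subseteq> carrier N"
  shows "rk (lset N k) Y = min (card Y) (rk N Y + k)"
proof -
  have fY: "finite Y" using finite_subset[OF assms(2) m_fin[OF assms(1)]] .
  obtain W where W: "W \<subseteq> Y" "nul N W \<le> k" "card W = min (card Y) (rk N Y + k)"
    using exists_nul[OF assms(1) fY] by blast
  show ?thesis
  proof (rule rk_eqI[of Y _ _ W])
    fix Z assume Z: "Z \<subseteq> Y" "Z \<in> indeps (lset N k)"
    then have "nul N Z \<le> k" by (auto simp: lset_simps)
    moreover have "rk N Z \<le> rk N Y" using rk_mono[OF assms(1) Z(1)] .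
    moreover have "card Z \<le> card Y" using Z fY card_mono by blast
    ultimately show "card Z \<le> min (card Y) (rk N Y + k)" unfolding nul_def by linarith
  qed (use W assms in \<open>auto simp: lset_simps\<close>)
qed

lemma indep_iff_nul: assumes "matroid N"
  shows "X \<in> indeps N \<longleftrightarrow> X \<subseteq> carrier N \<and> nul N X \<le> 0"
proof
  assume "X \<in> indeps N" then show "X \<subseteq> carrier N \<and> nul N X \<le> 0"
    using rk_indep[OF assms] m_sub[OF assms] by (simp add: nul_def)
next
  assume h: "X \<subseteq> carrier N \<and> nul N X \<le> 0"
  have fX: "finite X" using finite_subset[OF conjunct1[OF h] m_fin[OF assms]] .
  obtain Z where Z: "Z \<subseteq> X" "Z \<in> indeps N" "card Z = rk N X" using rk_obtain[OF assms(1), of "X"] by blast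
  have "card X \<le> card Z" using h Z unfolding nul_def by simp
  then have "Z = X" using card_seteq[OF fX Z(1)] by simp
  then show "X \<in> indeps N" using Z by simp
qed

lemma lift_iter: assumes "matroid N" shows "(lift ^^ k) N = lset N k"
proof (induction k)
  case 0
  have "N = (carrier N, indeps N)" by (simp add: carrier_def indeps_def)
  also have "\<dots> = lset N 0" unfolding lset_def using indep_iff_nul[OF assms] by auto
  finally show ?case by simp
next
  case (Suc k)
  have iff: "nul (lset N k) X \<le> 1 \<longleftrightarrow> nul N X \<le> Suc k" if "X \<subseteq> carrier N" for X
  proof -
    have "rk N X \<le> card X" using rk_card[OF assms finite_subset[OF that m_fin[OF assms]]] .
    then show ?thesis unfolding nul_def[of "lset N k"] rk_lset[OF assms that] nul_def by linarith
  qed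
  have "(lift ^^ Suc k) N = lift (lset N k)" using Suc by simp
  also have "\<dots> = (carrier N, {X. X \<subseteq> carrier N \<and> nul N X \<le> Suc k})"
    unfolding lift_def lset_simps(1) using iff by auto
  also have "\<dots> = lset N (Suc k)" by (simp add: lset_def)
  finally show ?case .
qed

lemma matroid_lset: assumes "matroid N" shows "matroid (lset N k)"
proof -
  have fin: "finite X" if "X \<subseteq> carrier N" for X using finite_subset[OF that m_fin[OF assms]] .
  have rkc: "rk N X \<le> card X" if "X \<subseteq> carrier N" for X using rk_card[OF assms fin[OF that]] .
  have "\<exists>y\<in>Y - X. insert y X \<in> indeps (lset N k)"
    if h: "X \<in> indeps (lset N k)" "Y \<in> indeps (lset N k)" "card X < card Y" for X Y
  proof -
    have X: "X \<subseteq> carrier N" "nul N X \<le> k" and Y: "Y \<subseteq> carrier N" "nul N Y \<le> k"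
      using h by (auto simp: lset_simps)
    have fX: "finite X" using fin X by blast
    show ?thesis
    proof (cases "nul N X < k")
      case True
      have "\<not> Y \<subseteq> X"
      proof
        assume yx: "Y \<subseteq> X" show False using card_mono[OF fX yx] h(3) by linarith
      qed
      then obtain y where y: "y \<in> Y - X" by blast
      have "rk N X \<le> rk N (insert y X)" using rk_mono[OF assms subset_insertI] .
      moreover have "card (insert y X) = card X + 1" using y fX by simp
      ultimately have "nul N (insert y X) \<le> k" using True unfolding nul_def by linarith
      then show ?thesis using y X Y by (auto simp: lset_simps)
    next
      case False
      then have "rk N X < rk N Y" using X(2) Y(2) h(3) rkc[OF X(1)] rkc[OF Y(1)] unfolding nul_def by linarith
      then obtain y where y: "y \<in> Y - X" "rk N (insert y X) = rk N X + 1" using rk_increase[OF assms _ fX] by blast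
      have "card (insert y X) = card X + 1" using y fX by simp
      then have "nul N (insert y X) \<le> k" using y X unfolding nul_def by linarith
      then show ?thesis using y X Y by (auto simp: lset_simps)
    qed
  qed
  note aug = this
  show ?thesis
    unfolding matroid_def[of "lset N k"]
  proof (intro conjI allI impI ballI)
    show "finite (carrier (lset N k))" using m_fin[OF assms] by (simp add: lset_simps)
    show "X \<subseteq> carrier (lset N k)" if "X \<in> indeps (lset N k)" for X
      using that by (simp add: lset_simps)
    show "{} \<in> indeps (lset N k)" by (simp add: lset_simps nul_def)
    show "Y \<in> indeps (lset N k)" if "X \<in> indeps (lset N k) \<and> Y \<subseteq> X" for X Y
    proof -
      have X: "X \<subseteq> carrier N" "nul N X \<le> k" "Y \<subseteq> X" using that by (auto simp: lset_simps)
      have "nul N Y \<le> k" using nul_mono[OF assms fin[OF X(1)] X(3)] X(2) by linarith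
      moreover have "Y \<subseteq> carrier N" using X by blast
      ultimately show ?thesis by (simp add: lset_simps)
    qed
    show "\<exists>y\<in>Y - X. insert y X \<in> indeps (lset N k)"
      if "X \<in> indeps (lset N k) \<and> Y \<in> indeps (lset N k) \<and> card X < card Y" for X Y
      using aug that by blast
  qed
qed

lemma fp_simps: "carrier (free_product M N) = carrier M \<union> carrier N"
  "indeps (free_product M N) = {A. A \<subseteq> carrier M \<union> carrier N \<and> A \<inter> carrier M \<in> indeps M
         \<and> lam M (A \<inter> carrier M) \<ge> nul N (A \<inter> carrier N)}"
  by (simp_all add: free_product_def carrier_def indeps_def)

lemma rk_fp: assumes M: "matroid M" and N: "matroid N" and d: "carrier M \<inter> carrier N = {}"
  and A: "A \<subseteq> carrier M \<union> carrier N"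
  shows "rk (free_product M N) A = min (rk M (A \<inter> carrier M) + card (A \<inter> carrier N))
      (rank_of M + rk N (A \<inter> carrier N))"
proof -
  let ?S = "carrier M" and ?T = "carrier N"
  have fS: "finite ?S" using m_fin[OF M] .
  have fT: "finite ?T" using m_fin[OF N] .
  have rAS: "rk M (A \<inter> ?S) \<le> rank_of M" unfolding rank_of_def using rk_mono[OF M Int_lower2] .
  obtain B where B: "B \<subseteq> A \<inter> ?S" "B \<in> indeps M" "card B = rk M (A \<inter> ?S)" using rk_obtain[OF M, of "A \<inter> ?S"] by blast
  obtain W where W: "W \<subseteq> A \<inter> ?T" "nul N W \<le> rank_of M - rk M (A \<inter> ?S)"
    "card W = min (card (A \<inter> ?T)) (rk N (A \<inter> ?T) + (rank_of M - rk M (A \<inter> ?S)))"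
    using exists_nul[OF N finite_Int[OF disjI2[OF fT]], where k = "rank_of M - rk M (A \<inter> ?S)"] by blast
  have BS: "(B \<union> W) \<inter> ?S = B" using B W d by auto
  have WT: "(B \<union> W) \<inter> ?T = W" using B W d by auto
  have fB: "finite B" using m_ifin[OF M B(2)] .
  have fW: "finite W" using finite_subset[OF W(1) finite_Int[OF disjI2[OF fT]]] .
  have cBW: "card (B \<union> W) = card B + card W" using B W d fB fW by (intro card_Un_disjoint) auto
  show ?thesis
  proof (rule rk_eqI[of A _ _ "B \<union> W"])
    fix Z assume Z: "Z \<subseteq> A" "Z \<in> indeps (free_product M N)"
    then have Z1: "Z \<inter> ?S \<in> indeps M" "lam M (Z \<inter> ?S) \<ge> nul N (Z \<inter> ?T)" by (auto simp: fp_simps)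
    have fZ: "finite Z" using finite_subset[OF order_trans[OF Z(1) A] finite_UnI[OF fS fT]] .
    have cZ: "card Z = card (Z \<inter> ?S) + card (Z \<inter> ?T)"
    proof -
      have "Z = (Z \<inter> ?S) \<union> (Z \<inter> ?T)" using Z A by auto
      then show ?thesis using d fZ by (metis card_Un_disjoint finite_Int Int_assoc Int_commute inf_bot_right Int_left_commute)
    qed
    have l: "lam M (Z \<inter> ?S) = rank_of M - card (Z \<inter> ?S)" unfolding lam_def using rk_indep[OF M Z1(1)] by simp
    have n: "nul N (Z \<inter> ?T) = card (Z \<inter> ?T) - rk N (Z \<inter> ?T)" unfolding nul_def ..
    have "Z \<inter> ?S \<subseteq> A \<inter> ?S" using Z(1) by blast
    then have a1: "card (Z \<inter> ?S) \<le> rk M (A \<inter> ?S)" using rk_ge[OF M _ Z1(1)] by blast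
    have zt: "Z \<inter> ?T \<subseteq> A \<inter> ?T" using Z(1) by blast
    have a2: "card (Z \<inter> ?T) \<le> card (A \<inter> ?T)" using card_mono[OF finite_Int[OF disjI2[OF fT]] zt] .
    have a3: "rk N (Z \<inter> ?T) \<le> rk N (A \<inter> ?T)" using rk_mono[OF N zt] .
    have a4: "card (Z \<inter> ?S) \<le> rank_of M" using indep_le_rank[OF M Z1(1)] .
    show "card Z \<le> min (rk M (A \<inter> ?S) + card (A \<inter> ?T)) (rank_of M + rk N (A \<inter> ?T))"
      using cZ l n a1 a2 a3 a4 Z1(2) by linarith
  next
    have "lam M B = rank_of M - rk M (A \<inter> ?S)" unfolding lam_def using rk_indep[OF M B(2)] B by simp
    then show "B \<union> W \<in> indeps (free_product M N)" unfolding fp_simps mem_Collect_eq BS WT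
      using B W m_sub[OF M B(2)] A by auto
  next
    show "card (B \<union> W) = min (rk M (A \<inter> ?S) + card (A \<inter> ?T)) (rank_of M + rk N (A \<inter> ?T))"
      using cBW B W rAS by simp
  qed (use B W in auto)
qed

lemma arith_key:
  fixes r c a b xs xt ut d e j i :: nat
  assumes h: "b \<le> a" "a \<le> b + xs" "a \<le> c" "c \<le> r" "e \<le> d" "d \<le> e + xt" "d \<le> xt + ut" "e \<le> ut"
    and hj: "j = ut - e" and hi: "i = r - c"
  shows "(min (a + (xt + ut)) (r + d) = (xs + xt) + min (b + ut) (r + e)) \<longleftrightarrow>
     (min a (r - j) = xs + min b (r - j) \<and>
      (min c (r - j) - min b (r - j)) - (min a (r - j) - min b (r - j)) \<ge>
       xt - (min (xt + ut) (d + i) - min ut (e + i)))"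
proof -
  have ic: "i + c = r" using hi h by simp
  have je: "j + e = ut" using hj h by simp
  show ?thesis
  proof (cases "r + e \<le> b + ut")
    case True
    have m: "r - j \<le> b" using True je by linarith
    have e1: "min b (r - j) = r - j" "min a (r - j) = r - j" "min c (r - j) = r - j" using m h by auto
    have e2: "min (b + ut) (r + e) = r + e" using True by simp
    have e3: "min ut (e + i) = e + i" "min (xt + ut) (d + i) = d + i" using True h ic je by auto
    have e4: "min (a + (xt + ut)) (r + d) = r + d" using True h by simp
    have e5: "d + i - (e + i) = d - e" by simp
    show ?thesis unfolding e1 e2 e3 e4 e5 using h by arith
  next
    case False
    define k where "k = r - j"
    have k: "k + ut = r + e" using False je k_def by linarith
    have m: "b < k" using False k by linarith
    have e1: "min b k = b" "min (b + ut) (r + e) = b + ut" using m False by auto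
    have e0: "(min c k - b) - (min a k - b) = min c k - min a k" using h m by (simp add: min_def)
    show ?thesis unfolding k_def[symmetric] e1 e0
    proof (cases "a \<le> k")
      case a: True
      have e2: "min a k = a" using a by simp
      show "(min (a + (xt + ut)) (r + d) = xs + xt + (b + ut)) =
             (min a k = xs + b \<and> xt - (min (xt + ut) (d + i) - min ut (e + i)) \<le> min c k - min a k)"
        unfolding e2
      proof (cases "c \<le> k")
        case c: True
        have "ut \<le> e + i" using c ic k by linarith
        then have e3: "min c k = c" "min ut (e + i) = ut" using c by auto
        show "(min (a + (xt + ut)) (r + d) = xs + xt + (b + ut)) =
             (a = xs + b \<and> xt - (min (xt + ut) (d + i) - min ut (e + i)) \<le> min c k - a)"
          unfolding e3
        proof (cases "xt + ut \<le> d + i")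
          case True
          have "a + (xt + ut) \<le> r + d" using True h ic by linarith
          then show "(min (a + (xt + ut)) (r + d) = xs + xt + (b + ut)) =
             (a = xs + b \<and> xt - (min (xt + ut) (d + i) - ut) \<le> c - a)" using True by simp
        next
          case False
          have f1: "xt - (d + i - ut) \<le> c - a \<longleftrightarrow> xt + ut + a \<le> c + d + i"
            using False `ut \<le> e + i` h by linarith
          show "(min (a + (xt + ut)) (r + d) = xs + xt + (b + ut)) =
             (a = xs + b \<and> xt - (min (xt + ut) (d + i) - ut) \<le> c - a)"
            using False f1 h ic by (simp add: min_def)
        qed
      next
        case c: False
        have "e + i < ut" using c ic k by linarith
        then have e3: "min c k = k" "min ut (e + i) = e + i" "min (xt + ut) (d + i) = d + i"
          using c h by auto
        have f1: "xt - (d + i - (e + i)) \<le> k - a \<longleftrightarrow> xt + e + a \<le> k + d" using a h by linarith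
        show "(min (a + (xt + ut)) (r + d) = xs + xt + (b + ut)) =
             (a = xs + b \<and> xt - (min (xt + ut) (d + i) - min ut (e + i)) \<le> min c k - a)"
          unfolding e3 f1 using h k by (simp add: min_def)
      qed
    next
      case a: False
      have c: "\<not> c \<le> k" using a h by linarith
      have "e + i < ut" using c ic k by linarith
      then have e3: "min a k = k" "min c k = k" "min ut (e + i) = e + i" "min (xt + ut) (d + i) = d + i"
        using a c h by auto
      show "(min (a + (xt + ut)) (r + d) = xs + xt + (b + ut)) =
             (min a k = xs + b \<and> xt - (min (xt + ut) (d + i) - min ut (e + i)) \<le> min c k - min a k)"
        unfolding e3 using h k a by (simp add: min_def)
    qed
  qed
qed

lemma minor_simps: "carrier (minor X A B) = B - A"
  "indeps (minor X A B) = {Y. Y \<subseteq> B - A \<and> rk (restr X B) (Y \<union> A) = card Y + rk (restr X B) A}"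
  by (simp_all add: minor_def contr_def restr_def carrier_def indeps_def)

lemma rk_minor: assumes "matroid X" "A \<subseteq> B" "B \<subseteq> carrier X" "Y \<subseteq> B - A"
  shows "rk (minor X A B) Y = rk X (Y \<union> A) - rk X A"
proof -
  have "rk (minor X A B) Y = rk (restr X B) (Y \<union> A) - rk (restr X B) A"
    unfolding minor_def using assms
    by (intro rk_contr matroid_restr) (auto simp: restr_def carrier_def)
  also have "\<dots> = rk X (Y \<union> A) - rk X A" using assms by (subst (1 2) rk_restr) auto
  finally show ?thesis .
qed

lemma pair_eqI: "carrier P = carrier Q \<Longrightarrow> indeps P = indeps Q \<Longrightarrow> P = Q"
  by (simp add: carrier_def indeps_def prod_eq_iff)

theorem theorem5p3:
  fixes M N :: "'a matroid" and U V :: "'a set"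
  assumes "matroid M" and "matroid N"
    and "carrier M \<inter> carrier N = {}"
    and "U \<subseteq> V" and "V \<subseteq> carrier M \<union> carrier N"
  shows "minor (free_product M N) U V =
    free_product
      (minor ((trunc ^^ nul N (U \<inter> carrier N)) M) (U \<inter> carrier M) (V \<inter> carrier M))
      (minor ((lift ^^ lam M (V \<inter> carrier M)) N) (U \<inter> carrier N) (V \<inter> carrier N))"
proof -
  note M = assms(1) and N = assms(2) and d = assms(3) and UV = assms(4) and VST = assms(5)
  define S where "S = carrier M"
  define T where "T = carrier N"
  define r where "r = rank_of M"
  define j where "j = nul N (U \<inter> T)"
  define i where "i = lam M (V \<inter> S)"
  define M1 where "M1 = tset M (r - j)"
  define N1 where "N1 = lset N i"
  define M' where "M' = minor M1 (U \<inter> S) (V \<inter> S)"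
  define N' where "N' = minor N1 (U \<inter> T) (V \<inter> T)"
  define P where "P = free_product M N"
  have fS: "finite S" unfolding S_def using m_fin[OF M] .
  have fT: "finite T" unfolding T_def using m_fin[OF N] .
  have eqM: "(trunc ^^ nul N (U \<inter> carrier N)) M = M1" unfolding M1_def j_def r_def T_def by (rule trunc_iter[OF M])
  have eqN: "(lift ^^ lam M (V \<inter> carrier M)) N = N1" unfolding N1_def i_def S_def by (rule lift_iter[OF N])
  have mM1: "matroid M1" unfolding M1_def by (rule matroid_tset[OF M])
  have mN1: "matroid N1" unfolding N1_def by (rule matroid_lset[OF N])
  have cM1: "carrier M1 = S" unfolding M1_def S_def tset_simps ..
  have cN1: "carrier N1 = T" unfolding N1_def T_def lset_simps ..
  have rkM1: "rk M1 Y = min (rk M Y) (r - j)" for Y unfolding M1_def by (rule rk_tset[OF M])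
  have rkN1: "rk N1 Y = min (card Y) (rk N Y + i)" if "Y \<subseteq> T" for Y
    unfolding N1_def using rk_lset[OF N] that T_def by blast
  have rkM': "rk M' Y = rk M1 (Y \<union> (U \<inter> S)) - rk M1 (U \<inter> S)" if "Y \<subseteq> V \<inter> S - U \<inter> S" for Y
    unfolding M'_def using that UV cM1 by (intro rk_minor[OF mM1]) auto
  have rkN': "rk N' Y = rk N1 (Y \<union> (U \<inter> T)) - rk N1 (U \<inter> T)" if "Y \<subseteq> V \<inter> T - U \<inter> T" for Y
    unfolding N'_def using that UV cN1 by (intro rk_minor[OF mN1]) auto
  have carrL: "carrier (minor P U V) = V - U" by (simp add: minor_simps)
  have carrR: "carrier (free_product M' N') = V - U"
    unfolding fp_simps M'_def N'_def minor_simps using VST S_def T_def by auto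
  have indL: "X \<in> indeps (minor P U V) \<longleftrightarrow> X \<subseteq> V - U \<and> rk P (X \<union> U) = card X + rk P U" for X
  proof -
    have "rk (restr P V) U = rk P U" using rk_restr[OF UV] .
    moreover have "X \<subseteq> V - U \<Longrightarrow> rk (restr P V) (X \<union> U) = rk P (X \<union> U)"
      by (rule rk_restr) (use UV in blast)
    ultimately show ?thesis unfolding minor_simps mem_Collect_eq by auto
  qed
  have indR: "X \<in> indeps (free_product M' N') \<longleftrightarrow> X \<subseteq> V - U \<and> X \<inter> (V \<inter> S - U \<inter> S) \<in> indeps M'
      \<and> lam M' (X \<inter> (V \<inter> S - U \<inter> S)) \<ge> nul N' (X \<inter> (V \<inter> T - U \<inter> T))" for X
    using carrR unfolding fp_simps M'_def N'_def minor_simps by auto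
  have ind: "X \<in> indeps (minor P U V) \<longleftrightarrow> X \<in> indeps (free_product M' N')" if X: "X \<subseteq> V - U" for X
  proof -
    define XS where "XS = X \<inter> S"
    define XT where "XT = X \<inter> T"
    define US where "US = U \<inter> S"
    define UT where "UT = U \<inter> T"
    define VS where "VS = V \<inter> S"
    have X1: "X \<inter> (V \<inter> S - U \<inter> S) = XS" "X \<inter> (V \<inter> T - U \<inter> T) = XT" using X XS_def XT_def by auto
    have XSsub: "XS \<subseteq> VS - US" "XT \<subseteq> V \<inter> T - UT" using X XS_def XT_def US_def UT_def VS_def by auto
    have fin: "finite XS" "finite XT" "finite US" "finite UT"
      unfolding XS_def XT_def US_def UT_def using fS fT by simp_all
    have cX: "card X = card XS + card XT"
    proof -
      have "X = XS \<union> XT" using X VST XS_def XT_def S_def T_def by auto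
      moreover have "XS \<inter> XT = {}" using d XS_def XT_def S_def T_def by auto
      ultimately show ?thesis using fin card_Un_disjoint by metis
    qed
    have cXU: "card (XT \<union> UT) = card XT + card UT"
      using fin X XT_def UT_def by (intro card_Un_disjoint) auto
    have XU1: "(X \<union> U) \<inter> carrier M = XS \<union> US" "(X \<union> U) \<inter> carrier N = XT \<union> UT"
      using XS_def US_def XT_def UT_def S_def T_def by auto
    have XUsub: "X \<union> U \<subseteq> carrier M \<union> carrier N" "U \<subseteq> carrier M \<union> carrier N" using X UV VST by auto
    have rP1: "rk P (X \<union> U) = min (rk M (XS \<union> US) + (card XT + card UT)) (r + rk N (XT \<union> UT))"
      unfolding P_def rk_fp[OF M N d XUsub(1)] XU1 cXU r_def ..
    have rP2: "rk P U = min (rk M US + card UT) (r + rk N UT)"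
      unfolding P_def rk_fp[OF M N d XUsub(2)] r_def US_def UT_def S_def T_def ..
    have iM': "XS \<in> indeps M' \<longleftrightarrow> min (rk M (XS \<union> US)) (r - j) = card XS + min (rk M US) (r - j)"
    proof -
      have "XS \<union> US \<subseteq> VS" "US \<subseteq> VS" using XSsub US_def VS_def UV by auto
      then show ?thesis unfolding M'_def minor_simps using XSsub
        by (simp add: rk_restr rkM1 US_def VS_def)
    qed
    have rkM'1: "rank_of M' = min (rk M VS) (r - j) - min (rk M US) (r - j)"
    proof -
      have "rank_of M' = rk M' (VS - US)" unfolding rank_of_def M'_def minor_simps VS_def US_def ..
      also have "\<dots> = rk M1 (VS - US \<union> US) - rk M1 US" using rkM' VS_def US_def by auto
      also have "VS - US \<union> US = VS" using UV VS_def US_def by auto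
      finally show ?thesis using rkM1 by simp
    qed
    have lamM': "lam M' XS = (min (rk M VS) (r - j) - min (rk M US) (r - j))
        - (min (rk M (XS \<union> US)) (r - j) - min (rk M US) (r - j))"
      unfolding lam_def rkM'1 using rkM' XSsub rkM1 US_def VS_def by auto
    have nulN': "nul N' XT = card XT - (min (card XT + card UT) (rk N (XT \<union> UT) + i) - min (card UT) (rk N UT + i))"
    proof -
      have s: "XT \<union> UT \<subseteq> T" "UT \<subseteq> T" using XT_def UT_def by auto
      show ?thesis unfolding nul_def using rkN'[of XT] XSsub rkN1[OF s(1)] rkN1[OF s(2)] cXU UT_def by auto
    qed
    have hj: "j = card UT - rk N UT" unfolding j_def nul_def UT_def ..
    have hi: "i = r - rk M VS" unfolding i_def lam_def r_def VS_def ..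
    have c1: "rk M US \<le> rk M (XS \<union> US)" using rk_mono[OF M Un_upper2] .
    have c2: "rk M (XS \<union> US) \<le> rk M US + card XS" using rk_union_le[OF M fin(1), of US] by (simp add: Un_commute)
    have "XS \<union> US \<subseteq> VS" using XSsub UV unfolding US_def VS_def by blast
    then have c3: "rk M (XS \<union> US) \<le> rk M VS" using rk_mono[OF M] by blast
    have c4: "rk M VS \<le> r" unfolding r_def rank_of_def VS_def S_def using rk_mono[OF M Int_lower2] .
    have c5: "rk N UT \<le> rk N (XT \<union> UT)" using rk_mono[OF N Un_upper2] .
    have c6: "rk N (XT \<union> UT) \<le> rk N UT + card XT" using rk_union_le[OF N fin(2), of UT] by (simp add: Un_commute)
    have c7: "rk N (XT \<union> UT) \<le> card XT + card UT" using rk_card[OF N finite_UnI[OF fin(2) fin(4)]] cXU by simp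
    have c8: "rk N UT \<le> card UT" using rk_card[OF N fin(4)] .
    have key: "(min (rk M (XS \<union> US) + (card XT + card UT)) (r + rk N (XT \<union> UT)) = (card XS + card XT) + min (rk M US + card UT) (r + rk N UT)) \<longleftrightarrow>
     (min (rk M (XS \<union> US)) (r - j) = card XS + min (rk M US) (r - j) \<and>
      (min (rk M VS) (r - j) - min (rk M US) (r - j)) - (min (rk M (XS \<union> US)) (r - j) - min (rk M US) (r - j)) \<ge>
       card XT - (min (card XT + card UT) (rk N (XT \<union> UT) + i) - min (card UT) (rk N UT + i)))"
      by (rule arith_key[OF c1 c2 c3 c4 c5 c6 c7 c8 hj hi])
    show ?thesis unfolding indL indR X1 rP1 rP2 cX iM' lamM' nulN' using X key by simp
  qed
  have "minor P U V = free_product M' N'"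
    by (rule pair_eqI) (use carrL carrR ind indL indR in auto)
  then show ?thesis unfolding eqM eqN P_def M'_def N'_def S_def T_def .
qed

end
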